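(* Let $n \geq 3$, and let $\Sigma = \{x \in S^n : x_{n+1} = 0\}$ be the equator of the unit sphere $S^n \subset \mathbb{R}^{n+1}$, equipped with the metric induced by the standard metric $\overline{g}$ (so $\Sigma$ is a round unit $(n-1)$-sphere). Then there exists a smooth function $\eta: \Sigma \to \mathbb{R}$ such that \[\Delta_\Sigma \eta + (n-1)\eta < 0 \quad \text{at every point of } \Sigma\] and \[\int_\Sigma \big(|\nabla_\Sigma \eta|^2 - (n-1)\eta^2\big)\, d\sigma_{\overline{g}} > 0.\]
   Context: $\Delta_\Sigma$, $\nabla_\Sigma$ and $d\sigma_{\overline{g}}$ denote the Laplacian, gradient and area measure of $\Sigma$ with the induced metric. *)

theory Defs
  imports "HOL-Analysis.Analysis"
begin

fun Ck :: "nat \<Rightarrow> 'a::real_normed_vector set \<Rightarrow> ('a \<Rightarrow> real) \<Rightarrow> bool" where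
  "Ck 0 U f = continuous_on U f"
| "Ck (Suc k) U f = (\<exists>f'. (\<forall>x\<in>U. (f has_derivative f' x) (at x)) \<and> (\<forall>v. Ck k U (\<lambda>x. f' x v)))"

definition smooth_on :: "'a::real_normed_vector set \<Rightarrow> ('a \<Rightarrow> real) \<Rightarrow> bool" where
  "smooth_on U f = (\<forall>k. Ck k U f)"

definition egrad :: "(real^'n \<Rightarrow> real) \<Rightarrow> real^'n \<Rightarrow> real^'n" where
  "egrad f x = (\<chi> i. frechet_derivative f (at x) (axis i 1))"

definition elaplacian :: "(real^'n \<Rightarrow> real) \<Rightarrow> real^'n \<Rightarrow> real" where
  "elaplacian f x = (\<Sum>i\<in>UNIV. frechet_derivative (\<lambda>y. frechet_derivative f (at y) (axis i 1)) (at x) (axis i 1))"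

(* Unit sphere S^{n-1} = sphere 0 1 in real^'n, n = CARD('n).
   A function eta on the sphere is extended homogeneously of degree 0. *)
definition sph_ext :: "(real^'n \<Rightarrow> real) \<Rightarrow> real^'n \<Rightarrow> real" where
  "sph_ext \<eta> x = \<eta> (x /\<^sub>R norm x)"

definition smooth_on_sphere :: "(real^'n \<Rightarrow> real) \<Rightarrow> bool" where
  "smooth_on_sphere \<eta> = smooth_on (- {0}) (sph_ext \<eta>)"

(* Tangential gradient and Laplace-Beltrami operator of the round unit sphere:
   they coincide at |x| = 1 with the Euclidean gradient / Laplacian of the
   degree-0 homogeneous extension. *)
definition sphere_grad :: "(real^'n \<Rightarrow> real) \<Rightarrow> real^'n \<Rightarrow> real^'n" where
  "sphere_grad \<eta> x = egrad (sph_ext \<eta>) x"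

definition sphere_laplacian :: "(real^'n \<Rightarrow> real) \<Rightarrow> real^'n \<Rightarrow> real" where
  "sphere_laplacian \<eta> x = elaplacian (sph_ext \<eta>) x"

(* Integral w.r.t. the area measure of the unit sphere (cone construction):
   int_{S^{n-1}} g dsigma = n * int_{B^n} g(x/|x|) dx. *)
definition sphere_integral :: "(real^'n \<Rightarrow> real) \<Rightarrow> real" where
  "sphere_integral g = real CARD('n) * integral (ball 0 1) (\<lambda>x. g (x /\<^sub>R norm x))"

end

theory Submission
  imports Defs "HOL-Probability.Probability"
begin


lemma Ck_mono: "Ck (Suc k) U f \<Longrightarrow> Ck k U f"
proof (induction k arbitrary: f)
  case 0
  then obtain f' where "\<forall>x\<in>U. (f has_derivative f' x) (at x)" by auto
  then show ?case
    by (auto intro!: continuous_at_imp_continuous_on has_derivative_continuous)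
next
  case (Suc k)
  then obtain f' where f': "\<forall>x\<in>U. (f has_derivative f' x) (at x)" "\<forall>v. Ck (Suc k) U (\<lambda>x. f' x v)"
    by auto
  then show ?case using Suc.IH by auto
qed

lemma Ck_const: "Ck k U (\<lambda>x. c)"
proof (induction k arbitrary: c)
  case 0 then show ?case by simp
next
  case (Suc k)
  have "\<forall>x\<in>U. ((\<lambda>x. c) has_derivative (\<lambda>v. 0)) (at x)" by auto
  moreover have "\<forall>v. Ck k U (\<lambda>x. (\<lambda>x v. 0::real) x v)" using Suc.IH by simp
  ultimately show ?case by (simp only: Ck.simps) (rule exI[of _ "\<lambda>x v. 0"], simp)
qed

lemma Ck_add: "Ck k U f \<Longrightarrow> Ck k U g \<Longrightarrow> Ck k U (\<lambda>x. f x + g x)"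
proof (induction k arbitrary: f g)
  case 0 then show ?case by (auto intro: continuous_on_add)
next
  case (Suc k)
  from Suc.prems obtain f' where f': "\<forall>x\<in>U. (f has_derivative f' x) (at x)" "\<forall>v. Ck k U (\<lambda>x. f' x v)"
    by auto
  from Suc.prems obtain g' where g': "\<forall>x\<in>U. (g has_derivative g' x) (at x)" "\<forall>v. Ck k U (\<lambda>x. g' x v)"
    by auto
  show ?case
    apply simp
    apply (rule exI[of _ "\<lambda>x v. f' x v + g' x v"])
    using f' g' Suc.IH by (auto intro: has_derivative_add)
qed

lemma Ck_mult: "Ck k U f \<Longrightarrow> Ck k U g \<Longrightarrow> Ck k U (\<lambda>x. f x * g x)"
proof (induction k arbitrary: f g)
  case 0 then show ?case by (auto intro: continuous_on_mult)
next
  case (Suc k)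
  from Suc.prems obtain f' where f': "\<forall>x\<in>U. (f has_derivative f' x) (at x)" "\<forall>v. Ck k U (\<lambda>x. f' x v)"
    by auto
  from Suc.prems obtain g' where g': "\<forall>x\<in>U. (g has_derivative g' x) (at x)" "\<forall>v. Ck k U (\<lambda>x. g' x v)"
    by auto
  have fk: "Ck k U f" "Ck k U g" using Suc.prems Ck_mono by blast+
  show ?case
    apply simp
    apply (rule exI[of _ "\<lambda>x v. f x * g' x v + f' x v * g x"])
    using f' g' Suc.IH fk by (auto intro: has_derivative_mult Ck_add)
qed

lemma Ck_power: "Ck k U f \<Longrightarrow> Ck k U (\<lambda>x. f x ^ m)"
  by (induction m) (auto intro: Ck_mult Ck_const)

lemma Ck_linear: "bounded_linear l \<Longrightarrow> Ck k U l"
proof (cases k)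
  case 0
  assume "bounded_linear l" then show ?thesis using 0
    by (simp add: linear_continuous_on)
next
  case (Suc k')
  assume l: "bounded_linear l"
  show ?thesis unfolding Suc
    by (rule Ck.simps(2)[THEN iffD2], rule exI[of _ "\<lambda>x v. l v"])
       (auto intro: bounded_linear_imp_has_derivative[OF l] Ck_const)
qed

lemma Ck_inv_norm:
  "Ck k (- {0}) (\<lambda>x::'a::real_inner. inverse (norm x))"
proof (induction k)
  case 0 then show ?case
    by (auto intro!: continuous_on_inverse continuous_intros)
next
  case (Suc k)
  have d: "((\<lambda>x. inverse (norm x)) has_derivative (\<lambda>v. - (inner x v) * inverse (norm x) ^ 3)) (at x)"
    if "x \<in> - {0}" for x :: 'a
  proof -
    have x: "x \<noteq> 0" using that by auto
    have "((\<lambda>x. inverse (norm x)) has_derivative (\<lambda>v. - (inverse (norm x) * (v \<bullet> sgn x) * inverse (norm x)))) (at x)"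
      by (rule Deriv.has_derivative_inverse[OF _ has_derivative_norm[OF x]]) (use x in auto)
    moreover have "(\<lambda>v. - (inverse (norm x) * (v \<bullet> sgn x) * inverse (norm x))) = (\<lambda>v. - (inner x v) * inverse (norm x) ^ 3)"
      using x by (auto simp: sgn_div_norm inner_commute power3_eq_cube field_simps)
    ultimately show ?thesis by simp
  qed
  have "Ck k (- {0}) (\<lambda>x::'a. (- inner x v) * inverse (norm x) ^ 3)" for v
    by (rule Ck_mult[OF Ck_linear Ck_power[OF Suc.IH]])
       (intro bounded_linear_minus bounded_linear_inner_left)
  then show ?case
    apply (simp only: Ck.simps)
    apply (rule exI[of _ "\<lambda>x v. - (inner x v) * inverse (norm x) ^ 3"])
    using d by simp
qed



definition gN :: "real \<Rightarrow> real \<Rightarrow> real" where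
  "gN N s = (N-1)*(N+1)*(N+3) * s ^ 6 + 10*(N-1)*(N+1) * s ^ 4 + 120*(N-1) * s ^ 2 - 241"
definition gd :: "real \<Rightarrow> real \<Rightarrow> real" where
  "gd N s = 6*(N-1)*(N+1)*(N+3) * s ^ 5 + 40*(N-1)*(N+1) * s ^ 3 + 240*(N-1) * s"
definition gdd :: "real \<Rightarrow> real \<Rightarrow> real" where
  "gdd N s = 30*(N-1)*(N+1)*(N+3) * s ^ 4 + 120*(N-1)*(N+1) * s ^ 2 + 240*(N-1)"

lemma gN_deriv: "(gN N has_real_derivative gd N s) (at s)"
  unfolding gN_def gd_def
  by (auto intro!: derivative_eq_intros simp: algebra_simps)

lemma gd_deriv: "(gd N has_real_derivative gdd N s) (at s)"
  unfolding gdd_def gd_def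
  by (auto intro!: derivative_eq_intros simp: algebra_simps)

definition qa :: "'n \<Rightarrow> real^'n \<Rightarrow> real" where
  "qa a x = x$a * inverse (norm x)"

lemma smooth_gN: "smooth_on (- {0}) (\<lambda>x::real^'n. gN N (qa a x))"
proof -
  have q: "Ck k (- {0}) (qa a)" for k
    unfolding qa_def
    by (rule Ck_mult[OF Ck_linear Ck_inv_norm]) (rule bounded_linear_vec_nth)
  show ?thesis
    unfolding smooth_on_def gN_def diff_conv_add_uminus
    by (intro allI Ck_add Ck_mult[OF Ck_const] Ck_power[OF q] Ck_const)
qed

lemma inv_norm_deriv:
  assumes x: "x \<noteq> 0"
  shows "((\<lambda>x::'a::real_inner. inverse (norm x)) has_derivative (\<lambda>v. - (inner x v) * inverse (norm x) ^ 3)) (at x)"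
proof -
  have "((\<lambda>x. inverse (norm x)) has_derivative (\<lambda>v. - (inverse (norm x) * (v \<bullet> sgn x) * inverse (norm x)))) (at x)"
    by (rule Deriv.has_derivative_inverse[OF _ has_derivative_norm[OF x]]) (use x in auto)
  moreover have "(\<lambda>v. - (inverse (norm x) * (v \<bullet> sgn x) * inverse (norm x))) = (\<lambda>v. - (inner x v) * inverse (norm x) ^ 3)"
    using x by (auto simp: sgn_div_norm inner_commute power3_eq_cube field_simps)
  ultimately show ?thesis by simp
qed

definition Dqa :: "'n \<Rightarrow> real^'n \<Rightarrow> real^'n \<Rightarrow> real" where
  "Dqa a x v = v$a * inverse (norm x) - x$a * (x \<bullet> v) * inverse (norm x) ^ 3"

lemma qa_deriv:
  assumes x: "x \<noteq> 0"
  shows "(qa a has_derivative Dqa a x) (at x)"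
proof -
  have "((\<lambda>x. x$a * inverse (norm x)) has_derivative (\<lambda>v. x$a * (- (inner x v) * inverse (norm x) ^ 3) + v$a * inverse (norm x))) (at x)"
    by (rule has_derivative_mult[OF bounded_linear_imp_has_derivative[OF bounded_linear_vec_nth] inv_norm_deriv[OF x]])
  then show ?thesis unfolding qa_def Dqa_def
    by (rule has_derivative_eq_rhs) (auto simp: fun_eq_iff algebra_simps)
qed

lemma F_deriv:
  assumes x: "x \<noteq> 0"
  shows "((\<lambda>x. gN N (qa a x)) has_derivative (\<lambda>v. gd N (qa a x) * Dqa a x v)) (at x)"
proof -
  have "((\<lambda>x. gN N (qa a x)) has_derivative (\<lambda>v. gd N (qa a x) * Dqa a x v)) (at x within UNIV)"
    using has_derivative_compose[OF qa_deriv[OF x] gN_deriv[unfolded has_field_derivative_def]]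
    by (simp add: mult.commute o_def)
  then show ?thesis by simp
qed

lemma gd_q_deriv:
  assumes x: "x \<noteq> 0"
  shows "((\<lambda>x. gd N (qa a x)) has_derivative (\<lambda>v. gdd N (qa a x) * Dqa a x v)) (at x)"
proof -
  have "((\<lambda>x. gd N (qa a x)) has_derivative (\<lambda>v. gdd N (qa a x) * Dqa a x v)) (at x within UNIV)"
    using has_derivative_compose[OF qa_deriv[OF x] gd_deriv[unfolded has_field_derivative_def]]
    by (simp add: mult.commute o_def)
  then show ?thesis by simp
qed

lemma axis_comp: "axis i (c::real) $ j = (if j = i then c else 0)"
  by (simp add: axis_def)

definition Pf :: "real \<Rightarrow> 'n \<Rightarrow> 'n \<Rightarrow> real^'n \<Rightarrow> real" where
  "Pf N a i y = gd N (qa a y) * ((if a = i then 1 else 0) * inverse (norm y) - y$a * y$i * inverse (norm y) ^ 3)"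

lemma frechet_F:
  assumes y: "y \<noteq> 0"
  shows "frechet_derivative (\<lambda>x. gN N (qa a x)) (at y) (axis i 1) = Pf N a i y"
proof -
  have "frechet_derivative (\<lambda>x. gN N (qa a x)) (at y) = (\<lambda>v. gd N (qa a y) * Dqa a y v)"
    using frechet_derivative_at[OF F_deriv[OF y, of N a]] by simp
  then show ?thesis
    by (simp add: Dqa_def Pf_def inner_axis axis_comp)
qed



definition DPf :: "real \<Rightarrow> 'n \<Rightarrow> 'n \<Rightarrow> real^'n \<Rightarrow> real^'n \<Rightarrow> real" where
  "DPf N a i x w = gdd N (qa a x) * Dqa a x w * ((if a = i then 1 else 0) * inverse (norm x) - x$a * x$i * inverse (norm x) ^ 3)
     + gd N (qa a x) * ((if a = i then 1 else 0) * (- (x \<bullet> w) * inverse (norm x) ^ 3)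
         - ((w$a * x$i + x$a * w$i) * inverse (norm x) ^ 3 + x$a * x$i * (3 * inverse (norm x) ^ 2 * (- (x \<bullet> w) * inverse (norm x) ^ 3))))"

lemma P_deriv:
  fixes x :: "real^'n" and a i :: 'n
  assumes x: "x \<noteq> 0"
  shows "(Pf N a i has_derivative DPf N a i x) (at x)"
proof -
  have n: "((\<lambda>y. inverse (norm y)) has_derivative (\<lambda>v. - (inner x v) * inverse (norm x) ^ 3)) (at x)"
    by (rule inv_norm_deriv[OF x])
  have n3: "((\<lambda>y. inverse (norm y) ^ 3) has_derivative (\<lambda>v. 3 * inverse (norm x) ^ 2 * (- (inner x v) * inverse (norm x) ^ 3))) (at x)"
    using has_derivative_power[OF n, of 3] by (simp add: algebra_simps)
  have ya: "((\<lambda>y::real^'n. y$a) has_derivative (\<lambda>v. v$a)) (at x)"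
    by (rule bounded_linear_imp_has_derivative[OF bounded_linear_vec_nth])
  have yi: "((\<lambda>y::real^'n. y$i) has_derivative (\<lambda>v. v$i)) (at x)"
    by (rule bounded_linear_imp_has_derivative[OF bounded_linear_vec_nth])
  have yy: "((\<lambda>y::real^'n. y$a * y$i) has_derivative (\<lambda>v. x$a * v$i + v$a * x$i)) (at x)"
    by (rule has_derivative_mult[OF ya yi])
  have t3: "((\<lambda>y::real^'n. y$a * y$i * inverse (norm y) ^ 3) has_derivative
     (\<lambda>v. x$a * x$i * (3 * inverse (norm x) ^ 2 * (- (inner x v) * inverse (norm x) ^ 3)) + (x$a * v$i + v$a * x$i) * inverse (norm x) ^ 3)) (at x)"
    by (rule has_derivative_mult[OF yy n3])
  have t1: "((\<lambda>y::real^'n. (if a = i then 1 else 0) * inverse (norm y)) has_derivative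
     (\<lambda>v. (if a = i then 1 else 0) * (- (inner x v) * inverse (norm x) ^ 3))) (at x)"
    using has_derivative_mult[OF has_derivative_const n, of "if a = i then 1 else 0"] by simp
  have T: "((\<lambda>y::real^'n. (if a = i then 1 else 0) * inverse (norm y) - y$a * y$i * inverse (norm y) ^ 3) has_derivative
     (\<lambda>v. (if a = i then 1 else 0) * (- (inner x v) * inverse (norm x) ^ 3) - (x$a * x$i * (3 * inverse (norm x) ^ 2 * (- (inner x v) * inverse (norm x) ^ 3)) + (x$a * v$i + v$a * x$i) * inverse (norm x) ^ 3))) (at x)"
    by (rule has_derivative_diff[OF t1 t3])
  have "(Pf N a i has_derivative (\<lambda>v. gd N (qa a x) * ((if a = i then 1 else 0) * (- (inner x v) * inverse (norm x) ^ 3) - (x$a * x$i * (3 * inverse (norm x) ^ 2 * (- (inner x v) * inverse (norm x) ^ 3)) + (x$a * v$i + v$a * x$i) * inverse (norm x) ^ 3))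
      + gdd N (qa a x) * Dqa a x v * ((if a = i then 1 else 0) * inverse (norm x) - x$a * x$i * inverse (norm x) ^ 3))) (at x)"
    unfolding Pf_def by (rule has_derivative_mult[OF gd_q_deriv[OF x] T])
  then show ?thesis
    by (rule has_derivative_eq_rhs) (simp add: DPf_def fun_eq_iff algebra_simps)
qed

lemma frechet_P:
  assumes x: "x \<noteq> 0"
  shows "frechet_derivative (\<lambda>y. frechet_derivative (\<lambda>x. gN N (qa a x)) (at y) (axis i 1)) (at x) = DPf N a i x"
proof -
  have "((\<lambda>y. frechet_derivative (\<lambda>x. gN N (qa a x)) (at y) (axis i 1)) has_derivative DPf N a i x) (at x within UNIV)"
    by (rule has_derivative_transform_within_open[of "Pf N a i" _ x UNIV "- {0}"])
       (use x P_deriv[OF x] in \<open>auto simp: frechet_F\<close>)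
  then show ?thesis using frechet_derivative_at by fastforce
qed

lemma sum_sq_norm: "(\<Sum>i\<in>UNIV. (x::real^'n)$i ^ 2) = norm x ^ 2"
  unfolding power2_norm_eq_inner inner_vec_def by (simp add: power2_eq_square)

lemma lap_F:
  fixes x :: "real^'n" and a :: 'n
  assumes x: "norm x = 1"
  shows "elaplacian (\<lambda>x. gN N (qa a x)) x =
     (1 - (x$a)^2) * gdd N (x$a) - (real CARD('n) - 1) * x$a * gd N (x$a)"
proof -
  have x0: "x \<noteq> 0" using x by auto
  have q: "qa a x = x$a" using x by (simp add: qa_def)
  define d where "d i = (if a = i then 1 else (0::real))" for i
  have e: "DPf N a i x (axis i 1) = gdd N (x$a) * (d i - 2 * x$a * (d i * x$i) + (x$a)^2 * (x$i)^2)
      + gd N (x$a) * (- 2 * (d i * x$i) - x$a + 3 * x$a * (x$i)^2)" for i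
    by (simp add: DPf_def Dqa_def q x inner_axis axis_comp d_def power2_eq_square algebra_simps)
  have s1: "(\<Sum>i\<in>UNIV. d i) = 1" by (simp add: d_def)
  have "(\<Sum>i\<in>UNIV. d i * x$i) = (\<Sum>i\<in>UNIV. if a = i then x$i else 0)"
    by (rule sum.cong) (auto simp: d_def)
  then have s2: "(\<Sum>i\<in>UNIV. d i * x$i) = x$a" by simp
  have s3: "(\<Sum>i\<in>UNIV. (x$i)^2) = 1" using sum_sq_norm[of x] x by simp
  have "elaplacian (\<lambda>x. gN N (qa a x)) x = (\<Sum>i\<in>UNIV. DPf N a i x (axis i 1))"
    unfolding elaplacian_def using frechet_P[OF x0] by simp
  also have "\<dots> = gdd N (x$a) * ((\<Sum>i\<in>UNIV. d i) - 2 * x$a * (\<Sum>i\<in>UNIV. d i * x$i) + (x$a)^2 * (\<Sum>i\<in>UNIV. (x$i)^2))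
      + gd N (x$a) * (- 2 * (\<Sum>i\<in>UNIV. d i * x$i) - real CARD('n) * x$a + 3 * x$a * (\<Sum>i\<in>UNIV. (x$i)^2))"
    unfolding e by (simp add: sum.distrib sum_distrib_left sum_distrib_right sum_subtractf sum_negf algebra_simps)
  also have "\<dots> = (1 - (x$a)^2) * gdd N (x$a) - (real CARD('n) - 1) * x$a * gd N (x$a)"
    unfolding s1 s2 s3 by (simp add: algebra_simps power2_eq_square)
  finally show ?thesis .
qed



lemma scale_ball_nn:
  fixes F :: "real^'n \<Rightarrow> ennreal"
  assumes Fm[measurable]: "F \<in> borel_measurable borel"
    and hom: "\<And>x. F (t *\<^sub>R x) = F x" and t: "t > 0"
  shows "(\<integral>\<^sup>+x. F x * indicator (ball 0 t) x \<partial>lborel) = ennreal (t ^ CARD('n)) * (\<integral>\<^sup>+x. F x * indicator (ball 0 1) x \<partial>lborel)"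
proof -
  have ballm[measurable]: "\<And>r. ball (0::real^'n) r \<in> sets borel" by auto
  have eq: "lborel = density (distr lborel borel (\<lambda>x::real^'n. 0 + t *\<^sub>R x)) (\<lambda>_. ennreal (\<bar>t\<bar> ^ DIM(real^'n)))"
    using lborel_affine[where 'a="real^'n" and c=t and t=0] t by simp
  have "(\<integral>\<^sup>+x. F x * indicator (ball 0 t) x \<partial>lborel) =
      (\<integral>\<^sup>+x. F x * indicator (ball 0 t) x \<partial>density (distr lborel borel (\<lambda>x::real^'n. 0 + t *\<^sub>R x)) (\<lambda>_. ennreal (\<bar>t\<bar> ^ DIM(real^'n))))"
    by (subst eq[symmetric]) (rule refl)
  also have "\<dots> = (\<integral>\<^sup>+x. ennreal (\<bar>t\<bar> ^ DIM(real^'n)) * (F (t *\<^sub>R x) * indicator (ball 0 t) (t *\<^sub>R x)) \<partial>lborel)"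
    apply (subst nn_integral_density)
      apply measurable
    apply (subst nn_integral_distr)
      apply measurable
    done
  also have "\<dots> = (\<integral>\<^sup>+x. ennreal (t ^ CARD('n)) * (F x * indicator (ball 0 1) x) \<partial>lborel)"
  proof (rule nn_integral_cong)
    fix x :: "real^'n"
    have "t *\<^sub>R x \<in> ball 0 t \<longleftrightarrow> x \<in> ball 0 1" using t by (simp add: mem_ball)
    then show "ennreal (\<bar>t\<bar> ^ DIM(real^'n)) * (F (t *\<^sub>R x) * indicator (ball 0 t) (t *\<^sub>R x)) = ennreal (t ^ CARD('n)) * (F x * indicator (ball 0 1) x)"
      using t hom by (simp add: indicator_def)
  qed
  also have "\<dots> = ennreal (t ^ CARD('n)) * (\<integral>\<^sup>+x. F x * indicator (ball 0 1) x \<partial>lborel)"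
    by (rule nn_integral_cmult) measurable
  finally show ?thesis .
qed

lemma nn_integral_pow_Ico:
  assumes t: "t > 0" and n: "n \<ge> 1"
  shows "(\<integral>\<^sup>+r. ennreal (real n * r ^ (n - 1)) * indicator {0..<t} r \<partial>lborel) = ennreal (t ^ n)"
proof -
  have "((\<lambda>r. real n * r ^ (n - 1)) has_integral (t ^ n - 0 ^ n)) {0..t}"
    using t by (intro fundamental_theorem_of_calculus)
       (auto intro!: derivative_eq_intros simp: has_real_derivative_iff_has_vector_derivative[symmetric])
  moreover have "(0::real) ^ n = 0" using n by (simp add: zero_power)
  ultimately have hi: "((\<lambda>r. real n * r ^ (n - 1)) has_integral (t ^ n)) {0..t}" by simp
  have "(\<integral>\<^sup>+r. ennreal (real n * r ^ (n - 1)) * indicator {0..<t} r \<partial>lborel) =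
        (\<integral>\<^sup>+r. ennreal (real n * r ^ (n - 1)) * indicator {0..t} r \<partial>lborel)"
    by (intro nn_integral_cong_AE eventually_mono[OF AE_lborel_singleton[of t]])
       (auto simp: indicator_def)
  also have "\<dots> = ennreal (t ^ n)"
    by (rule nn_integral_has_integral_lebesgue'[OF _ hi]) auto
  finally show ?thesis .
qed

lemma polar_distr:
  fixes F :: "real^'n \<Rightarrow> ennreal"
  assumes Fm[measurable]: "F \<in> borel_measurable borel"
    and hom: "\<And>t x. t > 0 \<Longrightarrow> F (t *\<^sub>R x) = F x"
    and fin: "(\<integral>\<^sup>+x. F x * indicator (ball 0 1) x \<partial>lborel) < \<infinity>"
  shows "distr (density lborel F) borel norm = density lborel (\<lambda>r. (\<integral>\<^sup>+x. F x * indicator (ball 0 1) x \<partial>lborel) * ennreal (real CARD('n) * r ^ (CARD('n) - 1)) * indicator {0..} r)"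
    (is "?L = ?R")
proof -
  define \<Phi> where "\<Phi> = (\<integral>\<^sup>+x. F x * indicator (ball 0 1) x \<partial>lborel)"
  have ballm[measurable]: "\<And>r. ball (0::real^'n) r \<in> sets borel" by auto
  have sb: "sets (borel::real measure) = sigma_sets UNIV (range lessThan)"
    by (subst borel_Iio) (simp add: sets_measure_of)
  have L: "emeasure ?L {..<t} = (if t > 0 then ennreal (t ^ CARD('n)) * \<Phi> else 0)" for t :: real
  proof -
    have "emeasure ?L {..<t} = emeasure (density lborel F) (norm -` {..<t} \<inter> space (density lborel F))"
      by (rule emeasure_distr) auto
    also have "norm -` {..<t} \<inter> space (density lborel F) = ball (0::real^'n) t"
      by (auto simp: mem_ball)
    also have "emeasure (density lborel F) (ball (0::real^'n) t) = (\<integral>\<^sup>+x. F x * indicator (ball 0 t) x \<partial>lborel)"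
      by (rule emeasure_density) auto
    also have "\<dots> = (if t > 0 then ennreal (t ^ CARD('n)) * \<Phi> else 0)"
    proof (cases "t > 0")
      case True
      then show ?thesis unfolding \<Phi>_def using scale_ball_nn[OF Fm hom True] True by simp
    next
      case False
      then have e: "ball (0::real^'n) t = {}" by auto
      show ?thesis using False by (simp only: e) simp
    qed
    finally show ?thesis .
  qed
  have R: "emeasure ?R {..<t} = (if t > 0 then ennreal (t ^ CARD('n)) * \<Phi> else 0)" for t :: real
  proof -
    have "emeasure ?R {..<t} = (\<integral>\<^sup>+r. (\<Phi> * ennreal (real CARD('n) * r ^ (CARD('n) - 1)) * indicator {0..} r) * indicator {..<t} r \<partial>lborel)"
      unfolding \<Phi>_def by (rule emeasure_density) auto
    also have "\<dots> = (\<integral>\<^sup>+r. \<Phi> * (ennreal (real CARD('n) * r ^ (CARD('n) - 1)) * indicator {0..<t} r) \<partial>lborel)"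
      by (intro nn_integral_cong) (auto simp: indicator_def mult.assoc)
    also have "\<dots> = \<Phi> * (\<integral>\<^sup>+r. ennreal (real CARD('n) * r ^ (CARD('n) - 1)) * indicator {0..<t} r \<partial>lborel)"
      by (rule nn_integral_cmult) measurable
    also have "\<dots> = (if t > 0 then ennreal (t ^ CARD('n)) * \<Phi> else 0)"
    proof (cases "t > 0")
      case True
      then show ?thesis using nn_integral_pow_Ico[OF True, of "CARD('n)"] by (simp add: mult.commute)
    next
      case False
      then have "{0..<t} = {}" by auto
      then show ?thesis using False by simp
    qed
    finally show ?thesis .
  qed
  show ?thesis
  proof (rule measure_eqI_generator_eq_countable[where E="range lessThan" and A="range (\<lambda>n::nat. {..<real n})" and \<Omega>=UNIV])
    show "Int_stable (range lessThan :: real set set)"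
    proof (clarsimp simp: Int_stable_def)
      fix a b :: real
      have "{..<a} \<inter> {..<b} = {..<min a b}" by auto
      then show "{..<a} \<inter> {..<b} \<in> range lessThan" by blast
    qed
    show "range lessThan \<subseteq> Pow (UNIV :: real set)" by simp
    show "sets ?L = sigma_sets UNIV (range lessThan)" using sb by simp
    show "sets ?R = sigma_sets UNIV (range lessThan)" using sb by simp
    show "range (\<lambda>n::nat. {..<real n}) \<subseteq> range lessThan" by auto
    show "\<Union> (range (\<lambda>n::nat. {..<real n})) = UNIV"
      by (auto intro: reals_Archimedean2)
    show "countable (range (\<lambda>n::nat. {..<real n}))" by simp
    show "emeasure ?L a \<noteq> \<infinity>" if "a \<in> range (\<lambda>n::nat. {..<real n})" for a
      using that L fin unfolding \<Phi>_def by (auto simp: ennreal_mult_eq_top_iff split: if_splits)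
    show "emeasure ?L X = emeasure ?R X" if "X \<in> range lessThan" for X
      using that L R by auto
  qed
qed

lemma polar_integral:
  fixes F :: "real^'n \<Rightarrow> ennreal" and w :: "real \<Rightarrow> ennreal"
  assumes Fm[measurable]: "F \<in> borel_measurable borel"
    and wm[measurable]: "w \<in> borel_measurable borel"
    and hom: "\<And>t x. t > 0 \<Longrightarrow> F (t *\<^sub>R x) = F x"
    and fin: "(\<integral>\<^sup>+x. F x * indicator (ball 0 1) x \<partial>lborel) < \<infinity>"
  shows "(\<integral>\<^sup>+x. F x * w (norm x) \<partial>lborel) = (\<integral>\<^sup>+x. F x * indicator (ball 0 1) x \<partial>lborel) *
     (\<integral>\<^sup>+r. ennreal (real CARD('n) * r ^ (CARD('n) - 1)) * indicator {0..} r * w r \<partial>lborel)"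
proof -
  have "(\<integral>\<^sup>+x. F x * w (norm x) \<partial>lborel) = (\<integral>\<^sup>+x. w (norm x) \<partial>density lborel F)"
    by (subst nn_integral_density) auto
  also have "\<dots> = (\<integral>\<^sup>+r. w r \<partial>distr (density lborel F) borel norm)"
    by (subst nn_integral_distr) auto
  also have "\<dots> = (\<integral>\<^sup>+r. w r \<partial>density lborel (\<lambda>r. (\<integral>\<^sup>+x. F x * indicator (ball 0 1) x \<partial>lborel) * ennreal (real CARD('n) * r ^ (CARD('n) - 1)) * indicator {0..} r))"
    using polar_distr[OF Fm hom fin] by simp
  also have "\<dots> = (\<integral>\<^sup>+r. (\<integral>\<^sup>+x. F x * indicator (ball 0 1) x \<partial>lborel) * (ennreal (real CARD('n) * r ^ (CARD('n) - 1)) * indicator {0..} r * w r) \<partial>lborel)"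
    by (subst nn_integral_density) (auto simp: mult.assoc)
  also have "\<dots> = (\<integral>\<^sup>+x. F x * indicator (ball 0 1) x \<partial>lborel) *
     (\<integral>\<^sup>+r. ennreal (real CARD('n) * r ^ (CARD('n) - 1)) * indicator {0..} r * w r \<partial>lborel)"
    by (rule nn_integral_cmult) measurable
  finally show ?thesis .
qed

definition Rh :: "nat \<Rightarrow> real" where
  "Rh p = (if even p then sqrt pi / 2 * (fact p / (2 ^ p * fact (p div 2))) else fact (p div 2) / 2)"

lemma Rh_pos: "Rh p > 0"
  by (auto simp: Rh_def)

lemma Rh_rec: "Rh (p + 2) = (real p + 1) / 2 * Rh p"
proof (cases "even p")
  case True
  then obtain k where p: "p = 2 * k" by auto
  have d: "(p + 2) div 2 = Suc k" "p div 2 = k" "even (p + 2)" using p by auto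
  have f1: "fact (p + 2) = (real p + 2) * (real p + 1) * (fact p :: real)"
    by (simp add: p fact_Suc algebra_simps numeral_2_eq_2)
  have f2: "fact (Suc k) = (real k + 1) * (fact k :: real)" by (simp add: fact_Suc)
  have "Rh (p + 2) = sqrt pi / 2 * ((real p + 2) * (real p + 1) * fact p / (4 * 2 ^ p * ((real k + 1) * fact k)))"
    unfolding Rh_def using d f1 f2 by (simp add: power_add mult_ac add_ac)
  also have "(real p + 2) = 2 * (real k + 1)" using p by simp
  also have "sqrt pi / 2 * (2 * (real k + 1) * (real p + 1) * fact p / (4 * 2 ^ p * ((real k + 1) * fact k))) =
     (real p + 1) / 2 * (sqrt pi / 2 * (fact p / (2 ^ p * fact k)))"
  proof -
    have nz: "real k + 1 \<noteq> 0" "fact k \<noteq> (0::real)" "(2::real) ^ p \<noteq> 0" by auto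
    show ?thesis using nz by (simp add: divide_simps)
  qed
  also have "\<dots> = (real p + 1) / 2 * Rh p" using True d by (simp add: Rh_def)
  finally show ?thesis .
next
  case False
  then obtain k where p: "p = 2 * k + 1" using oddE by blast
  have "(p + 2) div 2 = Suc k" "p div 2 = k" using p by auto
  moreover have "fact (Suc k) = (real k + 1) * (fact k :: real)" by (simp add: fact_Suc)
  ultimately show ?thesis using False p
    by (simp add: Rh_def field_simps)
qed

lemma half_moment:
  "(\<integral>\<^sup>+r. ennreal (indicator {0..} r * (exp (- r\<^sup>2) * r ^ p)) \<partial>lborel) = ennreal (Rh p)"
proof -
  have hb: "has_bochner_integral lborel (\<lambda>r. indicator {0..} r *\<^sub>R (exp (- r\<^sup>2) * r ^ p)) (Rh p)"
  proof (cases "even p")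
    case True
    then obtain k where p: "p = 2 * k" by auto
    show ?thesis using gaussian_moment_even_pos[of k] by (simp add: Rh_def p)
  next
    case False
    then obtain k where p: "p = 2 * k + 1" using oddE by blast
    have "p div 2 = k" using p by auto
    then show ?thesis using gaussian_moment_odd_pos[of k] False by (simp add: Rh_def p)
  qed
  have "(\<integral>\<^sup>+r. ennreal (indicator {0..} r * (exp (- r\<^sup>2) * r ^ p)) \<partial>lborel) =
      ennreal (integral\<^sup>L lborel (\<lambda>r. indicator {0..} r *\<^sub>R (exp (- r\<^sup>2) * r ^ p)))"
  proof -
    have hb': "has_bochner_integral lborel (\<lambda>r. indicator {0..} r * (exp (- r\<^sup>2) * r ^ p)) (Rh p)"
      using hb by simp
    have "(\<integral>\<^sup>+r. ennreal (indicator {0..} r * (exp (- r\<^sup>2) * r ^ p)) \<partial>lborel) =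
      ennreal (integral\<^sup>L lborel (\<lambda>r. indicator {0..} r * (exp (- r\<^sup>2) * r ^ p)))"
      using hb' by (intro nn_integral_eq_integral) (auto simp: has_bochner_integral_iff indicator_def)
    then show ?thesis by simp
  qed
  also have "\<dots> = ennreal (Rh p)" using hb by (simp add: has_bochner_integral_iff)
  finally show ?thesis .
qed

definition Ag :: "nat \<Rightarrow> real" where "Ag k = 2 * Rh (2 * k)"

lemma full_moment:
  "(\<integral>\<^sup>+t. ennreal (exp (- t\<^sup>2) * t ^ (2 * k)) \<partial>lborel) = ennreal (Ag k)"
proof -
  define g where "g t = exp (- t\<^sup>2) * t ^ (2 * k)" for t :: real
  have g0: "g t \<ge> 0" for t by (simp add: g_def)
  have gm[measurable]: "g \<in> borel_measurable borel" unfolding g_def by measurable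
  have geven: "g (- t) = g t" for t by (simp add: g_def)
  have pos: "(\<integral>\<^sup>+t. ennreal (indicator {0..} t * g t) \<partial>lborel) = ennreal (Rh (2 * k))"
    using half_moment[of "2 * k"] by (simp add: g_def)
  have "(\<integral>\<^sup>+t. ennreal (indicator {0..} t * g t) \<partial>lborel) =
        ennreal \<bar>- 1\<bar> * (\<integral>\<^sup>+t. ennreal (indicator {0..} (0 + (- 1) * t) * g (0 + (- 1) * t)) \<partial>lborel)"
    by (rule nn_integral_real_affine) auto
  also have "\<dots> = (\<integral>\<^sup>+t. ennreal (indicator {..0} t * g t) \<partial>lborel)"
    by (simp add: geven indicator_def)
  also have "\<dots> = (\<integral>\<^sup>+t. ennreal (indicator {..<0} t * g t) \<partial>lborel)"
    by (intro nn_integral_cong_AE eventually_mono[OF AE_lborel_singleton[of 0]])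
       (auto simp: indicator_def)
  finally have neg: "(\<integral>\<^sup>+t. ennreal (indicator {..<0} t * g t) \<partial>lborel) = ennreal (Rh (2 * k))"
    using pos by simp
  have "(\<integral>\<^sup>+t. ennreal (g t) \<partial>lborel) =
      (\<integral>\<^sup>+t. ennreal (indicator {0..} t * g t) + ennreal (indicator {..<0} t * g t) \<partial>lborel)"
    by (intro nn_integral_cong) (auto simp: indicator_def)
  also have "\<dots> = (\<integral>\<^sup>+t. ennreal (indicator {0..} t * g t) \<partial>lborel) + (\<integral>\<^sup>+t. ennreal (indicator {..<0} t * g t) \<partial>lborel)"
    by (rule nn_integral_add) auto
  also have "\<dots> = ennreal (Ag k)"
    unfolding pos neg Ag_def using Rh_pos[of "2*k"] by (simp add: ennreal_plus[symmetric] del: ennreal_plus)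
  finally show ?thesis by (simp add: g_def)
qed

lemma card_Basis_cart: "card (Basis :: (real^'n) set) = CARD('n)"
  using DIM_cart[where 'a=real and 'b='n] by simp

lemma gauss_prod:
  fixes a :: "'n::finite"
  shows "(\<integral>\<^sup>+x. ennreal (((x::real^'n)$a) ^ (2 * j) * exp (- (norm x)\<^sup>2)) \<partial>lborel) =
     ennreal (Ag j) * ennreal (Ag 0) ^ (CARD('n) - 1)"
proof -
  define e :: "real^'n" where "e = axis a 1"
  have eB: "e \<in> Basis" by (simp add: e_def)
  define f where "f b t = ennreal (exp (- t\<^sup>2) * t ^ (2 * (if b = e then j else 0)))" for b :: "real^'n" and t :: real
  have fm: "\<And>b. b \<in> Basis \<Longrightarrow> f b \<in> borel_measurable borel" unfolding f_def by measurable
  have pw: "(\<Prod>b\<in>Basis. f b (x \<bullet> b)) = ennreal ((x$a) ^ (2 * j) * exp (- (norm x)\<^sup>2))" for x :: "real^'n"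
  proof -
    have "(\<Prod>b\<in>Basis. f b (x \<bullet> b)) = ennreal (\<Prod>b\<in>Basis. exp (- (x \<bullet> b)\<^sup>2) * (x \<bullet> b) ^ (2 * (if b = e then j else 0)))"
      unfolding f_def by (rule prod_ennreal) simp
    also have "(\<Prod>b\<in>Basis. exp (- (x \<bullet> b)\<^sup>2) * (x \<bullet> b) ^ (2 * (if b = e then j else 0))) =
       (\<Prod>b\<in>Basis. exp (- (x \<bullet> b)\<^sup>2)) * (\<Prod>b\<in>Basis. (if b = e then (x \<bullet> b) ^ (2 * j) else 1))"
      by (subst prod.distrib[symmetric]) (intro prod.cong refl, simp)
    also have "(\<Prod>b\<in>Basis. (if b = e then (x \<bullet> b) ^ (2 * j) else 1)) = (x \<bullet> e) ^ (2 * j)"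
      using eB by (simp add: prod.delta)
    also have "(\<Prod>b\<in>Basis. exp (- (x \<bullet> b)\<^sup>2)) = exp (- (\<Sum>b\<in>Basis. (x \<bullet> b)\<^sup>2))"
      by (simp add: exp_sum[symmetric] sum_negf)
    also have "(\<Sum>b\<in>Basis. (x \<bullet> b)\<^sup>2) = (norm x)\<^sup>2"
    proof -
      have A: "(\<Sum>b\<in>Basis. (x \<bullet> b)\<^sup>2) = x \<bullet> x" by (simp add: euclidean_inner[of x x] power2_eq_square)
      have B: "(norm x)\<^sup>2 = x \<bullet> x" by (rule power2_norm_eq_inner)
      show ?thesis using A B by linarith
    qed
    also have "x \<bullet> e = x$a" by (simp add: e_def inner_axis)
    finally show ?thesis by (simp add: mult.commute)
  qed
  have "(\<integral>\<^sup>+x. ennreal (((x::real^'n)$a) ^ (2 * j) * exp (- (norm x)\<^sup>2)) \<partial>lborel) =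
      (\<integral>\<^sup>+x. (\<Prod>b\<in>Basis. f b ((x::real^'n) \<bullet> b)) \<partial>lborel)"
    by (simp add: pw)
  also have "\<dots> = (\<Prod>b\<in>Basis. (\<integral>\<^sup>+t. f b t \<partial>lborel))"
    by (rule nn_integral_lborel_prod) (auto simp: fm f_def)
  also have "\<dots> = (\<Prod>b\<in>Basis. ennreal (Ag (if b = e then j else 0)))"
    unfolding f_def by (intro prod.cong refl full_moment)
  also have "\<dots> = ennreal (Ag (if e = e then j else 0)) * (\<Prod>b\<in>Basis - {e}. ennreal (Ag (if b = e then j else 0)))"
    using eB by (simp add: prod.remove)
  also have "(\<Prod>b\<in>Basis - {e}. ennreal (Ag (if b = e then j else 0))) = (\<Prod>b\<in>Basis - {e}. ennreal (Ag 0))"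
    by (rule prod.cong) auto
  also have "\<dots> = ennreal (Ag 0) ^ (CARD('n) - 1)"
    using eB by (simp add: card_Basis_cart)
  finally show ?thesis by simp
qed


lemma qv_bound: "\<bar>qa a x\<bar> \<le> 1"
proof (cases "x = 0")
  case True then show ?thesis by (simp add: qa_def)
next
  case False
  then show ?thesis using component_le_norm_cart[of x a]
    by (simp add: qa_def abs_mult field_simps)
qed

lemma qv_hom: "t > 0 \<Longrightarrow> qa a (t *\<^sub>R x) = qa a x"
  by (simp add: qa_def)

lemma qv_meas[measurable]: "qa (a::'n::finite) \<in> borel_measurable borel"
proof -
  have [measurable]: "(\<lambda>x::real^'n. x$a) \<in> borel_measurable borel"
    by (intro borel_measurable_continuous_onI linear_continuous_on bounded_linear_vec_nth)
  show ?thesis unfolding qa_def by measurable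
qed

definition phim :: "'n itself \<Rightarrow> nat \<Rightarrow> real" where
  "phim _ j = Ag j * Ag 0 ^ (CARD('n) - 1) / (real CARD('n) * Rh (CARD('n) - 1 + 2 * j))"

lemma moment_nn:
  fixes a :: "'n::finite"
  shows "(\<integral>\<^sup>+x. ennreal ((qa a x) ^ (2 * j)) * indicator (ball 0 1) x \<partial>lborel) = ennreal (phim TYPE('n) j)"
proof -
  define F where "F x = ennreal ((qa a x) ^ (2 * j))" for x :: "real^'n"
  define \<Phi> where "\<Phi> = (\<integral>\<^sup>+x. F x * indicator (ball 0 1) x \<partial>lborel)"
  have Fm[measurable]: "F \<in> borel_measurable borel" unfolding F_def by measurable
  have hom: "\<And>t x. t > 0 \<Longrightarrow> F (t *\<^sub>R x) = F x" by (simp add: F_def qv_hom)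
  have "\<Phi> \<le> (\<integral>\<^sup>+x. indicator (ball (0::real^'n) 1) x \<partial>lborel)"
    unfolding \<Phi>_def F_def
  proof (intro nn_integral_mono)
    fix x :: "real^'n"
    have "(qa a x)\<^sup>2 \<le> 1" using qv_bound[of a x] by (simp add: abs_square_le_1)
    then have "((qa a x)\<^sup>2) ^ j \<le> 1" by (rule power_le_one[OF zero_le_power2])
    then have "(qa a x) ^ (2 * j) \<le> 1" by (simp add: power_mult)
    then show "ennreal ((qa a x) ^ (2 * j)) * indicator (ball 0 1) x \<le> indicator (ball 0 1) x"
      by (auto simp: indicator_def)
  qed
  also have "\<dots> < \<infinity>" using emeasure_lborel_ball_finite by simp
  finally have fin: "\<Phi> < \<infinity>" .
  define w where "w r = ennreal (r ^ (2 * j) * exp (- r\<^sup>2))" for r :: real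
  have wm[measurable]: "w \<in> borel_measurable borel" unfolding w_def by measurable
  have "(\<integral>\<^sup>+x. F x * w (norm x) \<partial>lborel) = \<Phi> *
     (\<integral>\<^sup>+r. ennreal (real CARD('n) * r ^ (CARD('n) - 1)) * indicator {0..} r * w r \<partial>lborel)"
    unfolding \<Phi>_def by (rule polar_integral[OF Fm wm hom fin[unfolded \<Phi>_def]])
  also have "(\<integral>\<^sup>+r. ennreal (real CARD('n) * r ^ (CARD('n) - 1)) * indicator {0..} r * w r \<partial>lborel) =
      ennreal (real CARD('n)) * ennreal (Rh (CARD('n) - 1 + 2 * j))"
  proof -
    define K where "K = CARD('n) - 1"
    have "(\<integral>\<^sup>+r. ennreal (real CARD('n) * r ^ K) * indicator {0..} r * w r \<partial>lborel) =
      (\<integral>\<^sup>+r. ennreal (real CARD('n)) * ennreal (indicator {0..} r * (exp (- r\<^sup>2) * r ^ (K + 2 * j))) \<partial>lborel)"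
    proof (intro nn_integral_cong)
      fix r :: real
      have pw: "r ^ K * r ^ (2 * j) = r ^ (K + 2 * j)" by (simp only: power_add)
      show "ennreal (real CARD('n) * r ^ K) * indicator {0..} r * w r =
         ennreal (real CARD('n)) * ennreal (indicator {0..} r * (exp (- r\<^sup>2) * r ^ (K + 2 * j)))"
      proof (cases "r \<ge> 0")
        case True
        then have "ennreal (real CARD('n) * r ^ K) * w r = ennreal (real CARD('n)) * ennreal (exp (- r\<^sup>2) * (r ^ K * r ^ (2 * j)))"
          unfolding w_def by (simp add: ennreal_mult'[symmetric] mult_ac)
        then show ?thesis using True by (simp add: pw indicator_def)
      qed (simp add: indicator_def)
    qed
    also have "\<dots> = ennreal (real CARD('n)) * ennreal (Rh (K + 2 * j))"
      by (subst nn_integral_cmult) (auto simp: half_moment)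
    finally show ?thesis unfolding K_def .
  qed
  also have "(\<integral>\<^sup>+x. F x * w (norm x) \<partial>lborel) = (\<integral>\<^sup>+x. ennreal (((x::real^'n)$a) ^ (2 * j) * exp (- (norm x)\<^sup>2)) \<partial>lborel)"
  proof (intro nn_integral_cong)
    fix x :: "real^'n"
    show "F x * w (norm x) = ennreal ((x$a) ^ (2 * j) * exp (- (norm x)\<^sup>2))"
    proof (cases "x = 0")
      case True then show ?thesis by (cases j) (simp_all add: F_def w_def qa_def)
    next
      case False
      then have "(qa a x) ^ (2 * j) * (norm x ^ (2 * j)) = (x$a) ^ (2 * j)"
      proof -
        have "x$a * inverse (norm x) * norm x = x$a" using False by simp
        then show ?thesis by (simp only: qa_def power_mult_distrib[symmetric])
      qed
      then show ?thesis unfolding F_def w_def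
        by (simp add: ennreal_mult'[symmetric] mult.assoc[symmetric])
    qed
  qed
  also have "\<dots> = ennreal (Ag j) * ennreal (Ag 0) ^ (CARD('n) - 1)" by (rule gauss_prod)
  finally have eq: "ennreal (Ag j) * ennreal (Ag 0) ^ (CARD('n) - 1) = \<Phi> * (ennreal (real CARD('n)) * ennreal (Rh (CARD('n) - 1 + 2 * j)))" .
  define c where "c = real CARD('n) * Rh (CARD('n) - 1 + 2 * j)"
  have cpos: "c > 0" unfolding c_def using Rh_pos by simp
  have Agp: "Ag k > 0" for k unfolding Ag_def using Rh_pos by simp
  have e1: "ennreal (Ag j * Ag 0 ^ (CARD('n) - 1)) = ennreal (Ag j) * ennreal (Ag 0) ^ (CARD('n) - 1)"
    using Agp by (simp add: ennreal_mult less_imp_le ennreal_power)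
  have e2: "ennreal c = ennreal (real CARD('n)) * ennreal (Rh (CARD('n) - 1 + 2 * j))"
    unfolding c_def using Rh_pos by (simp add: ennreal_mult less_imp_le)
  have "\<Phi> * ennreal c = ennreal (Ag j * Ag 0 ^ (CARD('n) - 1))"
    unfolding e1 e2 using eq by simp
  then have "\<Phi> * ennreal c * ennreal (1 / c) = ennreal (Ag j * Ag 0 ^ (CARD('n) - 1)) * ennreal (1 / c)" by simp
  then have "\<Phi> = ennreal (Ag j * Ag 0 ^ (CARD('n) - 1) / c)"
  proof -
    assume h: "\<Phi> * ennreal c * ennreal (1 / c) = ennreal (Ag j * Ag 0 ^ (CARD('n) - 1)) * ennreal (1 / c)"
    have "\<Phi> * ennreal c * ennreal (1 / c) = \<Phi>"
      using cpos by (simp add: mult.assoc ennreal_mult'[symmetric])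
    moreover have "ennreal (Ag j * Ag 0 ^ (CARD('n) - 1)) * ennreal (1 / c) = ennreal (Ag j * Ag 0 ^ (CARD('n) - 1) / c)"
      using cpos Agp by (simp add: ennreal_mult[symmetric] less_imp_le)
    ultimately show ?thesis using h by simp
  qed
  then show ?thesis unfolding \<Phi>_def F_def phim_def c_def by simp
qed

lemma phim_pos: "phim TYPE('n::finite) j > 0"
  unfolding phim_def Ag_def using Rh_pos by simp

lemma phim_rec: "phim TYPE('n::finite) (Suc j) = phim TYPE('n) j * (2 * real j + 1) / (real CARD('n) + 2 * real j)"
proof -
  have A: "Ag (Suc j) = (2 * real j + 1) / 2 * Ag j"
    unfolding Ag_def using Rh_rec[of "2 * j"] by (simp add: algebra_simps)
  have c: "CARD('n) - 1 + 2 * Suc j = (CARD('n) - 1 + 2 * j) + 2" by simp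
  have r: "real (CARD('n) - 1 + 2 * j) + 1 = real CARD('n) + 2 * real j"
  proof -
    have "CARD('n) > 0" by simp
    then obtain M where "CARD('n) = Suc M" using gr0_implies_Suc by blast
    then show ?thesis by simp
  qed
  have R: "Rh (CARD('n) - 1 + 2 * Suc j) = (real CARD('n) + 2 * real j) / 2 * Rh (CARD('n) - 1 + 2 * j)"
    unfolding c Rh_rec r ..
  have c0: "real CARD('n) > 0" by simp
  have p1: "Rh (CARD('n) - 1 + 2 * j) > 0" "real CARD('n) > 0" "Ag j > 0" "Ag 0 > 0" "real CARD('n) + 2 * real j > 0"
    using Rh_pos c0 by (auto simp: Ag_def intro: add_pos_nonneg)
  define X where "X = Rh (CARD('n) - 1 + 2 * j)"
  define Y where "Y = Ag 0 ^ (CARD('n) - 1)"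
  define Nr where "Nr = real CARD('n)"
  define D where "D = Nr + 2 * real j"
  have "X > 0" "Nr > 0" "D > 0" using p1 by (auto simp: X_def Nr_def D_def)
  then have "(2 * real j + 1) / 2 * Ag j * Y / (Nr * (D / 2 * X)) = Ag j * Y / (Nr * X) * (2 * real j + 1) / D"
    by (simp add: field_simps)
  then show ?thesis unfolding phim_def A R X_def[symmetric] Y_def[symmetric] Nr_def[symmetric] D_def[symmetric] .
qed

lemma moment_has_integral:
  fixes a :: "'n::finite"
  shows "((\<lambda>x. (qa a x) ^ (2 * j)) has_integral phim TYPE('n) j) (ball 0 1)"
proof -
  have "((\<lambda>x. indicator (ball (0::real^'n) 1) x * (qa a x) ^ (2 * j)) has_integral phim TYPE('n) j) UNIV"
  proof (rule nn_integral_has_integral)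
    have [measurable]: "ball (0::real^'n) 1 \<in> sets borel" by auto
    have [measurable]: "(\<lambda>x. qa a x) \<in> borel_measurable borel" using qv_meas[of a] by simp
    show "(\<lambda>x. indicator (ball (0::real^'n) 1) x * (qa a x) ^ (2 * j)) \<in> borel_measurable borel"
      by measurable
    show "0 \<le> indicator (ball (0::real^'n) 1) x * (qa a x) ^ (2 * j)" for x
      by (simp add: power_mult)
    show "0 \<le> phim TYPE('n) j" by (rule less_imp_le[OF phim_pos])
    have "(\<integral>\<^sup>+x. ennreal (indicator (ball (0::real^'n) 1) x * (qa a x) ^ (2 * j)) \<partial>lborel) =
        (\<integral>\<^sup>+x. ennreal ((qa a x) ^ (2 * j)) * indicator (ball 0 1) x \<partial>lborel)"
      by (intro nn_integral_cong) (simp add: indicator_def)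
    then show "(\<integral>\<^sup>+x. ennreal (indicator (ball (0::real^'n) 1) x * (qa a x) ^ (2 * j)) \<partial>lborel) = ennreal (phim TYPE('n) j)"
      using moment_nn by simp
  qed
  moreover have "(\<lambda>x. indicator (ball (0::real^'n) 1) x * (qa a x) ^ (2 * j)) = (\<lambda>x. if x \<in> ball 0 1 then (qa a x) ^ (2 * j) else 0)"
    by (auto simp: indicator_def)
  ultimately have "((\<lambda>x. if x \<in> ball 0 1 then (qa a x) ^ (2 * j) else 0) has_integral phim TYPE('n) j) UNIV"
    by simp
  then show ?thesis by (rule has_integral_restrict_UNIV[THEN iffD1])
qed

lemma L_identity:
  "(1 - s^2) * gdd N s - (N - 1) * s * gd N s + (N - 1) * gN N s = - (5*(N-1)*(N+1)*(N+3)*(N+5) * s^6 + (N - 1))"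
  unfolding gN_def gd_def gdd_def by algebra

definition cc :: "real \<Rightarrow> nat \<Rightarrow> real" where
  "cc N j = (if j = 0 then 58081 - 58081*N
     else if j = 1 then 115440 - 230880*N + 115440*N^2
     else if j = 2 then -19180 + 47980*N - 38420*N^2 + 9620*N^3
     else if j = 3 then -5114 + 7676*N + 2552*N^2 - 7676*N^3 + 2562*N^4
     else if j = 4 then -7980 + 4940*N + 11160*N^2 - 5080*N^3 - 3180*N^4 + 140*N^5
     else if j = 5 then -1056 - 304*N + 2128*N^2 + 608*N^3 - 1088*N^4 - 304*N^5 + 16*N^6
     else -315 - 219*N + 589*N^2 + 437*N^3 - 233*N^4 - 217*N^5 - 41*N^6 - N^7)"

lemma Pol_identity:
  "(1 - s^2) * (gd N s)^2 - (N - 1) * (gN N s)^2 = (\<Sum>j<7. cc N j * s ^ (2 * j))"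
  by (simp add: gN_def gd_def cc_def eval_nat_numeral) algebra

definition mm :: "real \<Rightarrow> nat \<Rightarrow> real" where
  "mm N j = (\<Prod>i<j. (2 * real i + 1) / (N + 2 * real i))"

lemma total_pos:
  fixes N :: real
  assumes N: "N \<ge> 3"
  shows "0 < 215706375 + 109128615*N - 223439381*N^2 - 121793659*N^3 + 5315665*N^4 + 12521915*N^5 + 2416396*N^6 + 144074*N^7"
proof -
  define u where "u = N - 3"
  have u: "u \<ge> 0" using N by (simp add: u_def)
  have "215706375 + 109128615*N - 223439381*N^2 - 121793659*N^3 + 5315665*N^4 + 12521915*N^5 + 2416396*N^6 + 144074*N^7
     = 793745730 + u * (5383845921 + u * (6019511410 + u * (2782270301 + u * (655507780 + u * (83247029 + u * (5441950 + u * 144074))))))"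
    unfolding u_def by algebra
  also have "\<dots> > 0" using u by (intro add_pos_nonneg mult_nonneg_nonneg add_nonneg_nonneg) auto
  finally show ?thesis .
qed

lemma sum_pos:
  assumes N: "N \<ge> 3"
  shows "(\<Sum>j<7. cc N j * mm N j) > 0"
proof -
  have N0: "N > 0" using N by simp
  define D where "D = N * (N+2) * (N+4) * (N+6) * (N+8) * (N+10)"
  have D0: "D > 0" unfolding D_def using N0 by simp
  have "D * (\<Sum>j<7. cc N j * mm N j) = 215706375 + 109128615*N - 223439381*N^2 - 121793659*N^3 + 5315665*N^4 + 12521915*N^5 + 2416396*N^6 + 144074*N^7"
  proof -
    have nz: "N \<noteq> 0" "N + 2 \<noteq> 0" "N + 4 \<noteq> 0" "N + 6 \<noteq> 0" "N + 8 \<noteq> 0" "N + 10 \<noteq> 0"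
      using N0 by linarith+
    show ?thesis unfolding D_def
      apply (simp add: cc_def mm_def eval_nat_numeral)
      apply (simp add: divide_simps nz)
      apply algebra
      done
  qed
  then have "D * (\<Sum>j<7. cc N j * mm N j) > 0" using total_pos[OF N] by simp
  then show ?thesis using D0 by (simp add: zero_less_mult_iff)
qed


lemma mm_Suc: "mm N (Suc j) = mm N j * (2 * real j + 1) / (N + 2 * real j)"
  by (simp add: mm_def)

lemma phim_mm: "phim TYPE('n::finite) j = phim TYPE('n) 0 * mm (real CARD('n)) j"
proof (induction j)
  case 0 then show ?case by (simp add: mm_def)
next
  case (Suc j) then show ?case by (simp add: phim_rec mm_Suc)
qed

lemma grad_norm:
  fixes y :: "real^'n" and a :: 'n
  assumes y: "norm y = 1"
  shows "(norm (egrad (\<lambda>x. gN N (qa a x)) y))\<^sup>2 = (1 - (y$a)\<^sup>2) * (gd N (y$a))\<^sup>2"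
proof -
  have y0: "y \<noteq> 0" using y by auto
  have q: "qa a y = y$a" using y by (simp add: qa_def)
  define d where "d i = (if a = i then 1 else (0::real))" for i
  have g: "egrad (\<lambda>x. gN N (qa a x)) y = (\<chi> i. Pf N a i y)"
    unfolding egrad_def using frechet_F[OF y0] by simp
  have e: "(Pf N a i y)\<^sup>2 = (gd N (y$a))\<^sup>2 * (d i - 2 * y$a * (d i * y$i) + (y$a)\<^sup>2 * (y$i)\<^sup>2)" for i
    by (simp add: Pf_def q y d_def power2_eq_square algebra_simps)
  have s1: "(\<Sum>i\<in>UNIV. d i) = 1" by (simp add: d_def)
  have "(\<Sum>i\<in>UNIV. d i * y$i) = (\<Sum>i\<in>UNIV. if a = i then y$i else 0)"
    by (rule sum.cong) (auto simp: d_def)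
  then have s2: "(\<Sum>i\<in>UNIV. d i * y$i) = y$a" by simp
  have s3: "(\<Sum>i\<in>UNIV. (y$i)\<^sup>2) = 1" using sum_sq_norm[of y] y by simp
  have "(norm (\<chi> i. Pf N a i y))\<^sup>2 = (\<Sum>i\<in>UNIV. (Pf N a i y)\<^sup>2)"
    using sum_sq_norm[of "\<chi> i. Pf N a i y"] by simp
  also have "\<dots> = (gd N (y$a))\<^sup>2 * ((\<Sum>i\<in>UNIV. d i) - 2 * y$a * (\<Sum>i\<in>UNIV. d i * y$i) + (y$a)\<^sup>2 * (\<Sum>i\<in>UNIV. (y$i)\<^sup>2))"
    unfolding e by (simp add: sum.distrib sum_distrib_left sum_distrib_right sum_subtractf algebra_simps)
  also have "\<dots> = (1 - (y$a)\<^sup>2) * (gd N (y$a))\<^sup>2"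
    unfolding s1 s2 s3 by (simp add: algebra_simps power2_eq_square)
  finally show ?thesis unfolding g .
qed

theorem proposition2p2:
  assumes "CARD('n) \<ge> 3"
  shows "\<exists>\<eta> :: real^'n \<Rightarrow> real.
           smooth_on_sphere \<eta> \<and>
           (\<forall>x\<in>sphere 0 1. sphere_laplacian \<eta> x + (real CARD('n) - 1) * \<eta> x < 0) \<and>
           sphere_integral (\<lambda>x. (norm (sphere_grad \<eta> x))\<^sup>2 - (real CARD('n) - 1) * (\<eta> x)\<^sup>2) > 0"
proof -
  obtain a :: 'n where True by simp
  define N where "N = real CARD('n)"
  have N3: "N \<ge> 3" using assms by (simp add: N_def)
  define \<eta> where "\<eta> = (\<lambda>y::real^'n. gN N (y$a))"
  have ext: "sph_ext \<eta> = (\<lambda>x. gN N (qa a x))"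
    by (rule ext) (simp add: sph_ext_def \<eta>_def qa_def mult.commute)
  have s1: "smooth_on_sphere \<eta>" unfolding smooth_on_sphere_def ext by (rule smooth_gN)
  have s2: "\<forall>x\<in>sphere 0 1. sphere_laplacian \<eta> x + (N - 1) * \<eta> x < 0"
  proof
    fix x :: "real^'n" assume "x \<in> sphere 0 1"
    then have nx: "norm x = 1" by simp
    have "sphere_laplacian \<eta> x = (1 - (x$a)^2) * gdd N (x$a) - (N - 1) * x$a * gd N (x$a)"
      unfolding sphere_laplacian_def ext using lap_F[OF nx] by (simp add: N_def)
    moreover have "\<eta> x = gN N (x$a)" by (simp add: \<eta>_def)
    ultimately have "sphere_laplacian \<eta> x + (N - 1) * \<eta> x = - (5*(N-1)*(N+1)*(N+3)*(N+5) * (x$a)^6 + (N - 1))"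
      using L_identity[of "x$a" N] by simp
    also have "\<dots> < 0"
    proof -
      have "0 \<le> 5*(N-1)*(N+1)*(N+3)*(N+5) * (x$a)^6" using N3 by (simp add: zero_le_even_power)
      then show ?thesis using N3 by linarith
    qed
    finally show "sphere_laplacian \<eta> x + (N - 1) * \<eta> x < 0" .
  qed
  define H where "H y = (norm (sphere_grad \<eta> y))\<^sup>2 - (N - 1) * (\<eta> y)\<^sup>2" for y :: "real^'n"
  have Hq: "H (x /\<^sub>R norm x) = (\<Sum>j<7. cc N j * (qa a x) ^ (2 * j))" if "x \<noteq> 0" for x :: "real^'n"
  proof -
    define y where "y = x /\<^sub>R norm x"
    have ny: "norm y = 1" using that by (simp add: y_def)
    have ya: "y$a = qa a x" by (simp add: y_def qa_def mult.commute)
    have "H y = (1 - (y$a)\<^sup>2) * (gd N (y$a))\<^sup>2 - (N - 1) * (gN N (y$a))\<^sup>2"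
      unfolding H_def sphere_grad_def ext using grad_norm[OF ny] by (simp add: \<eta>_def)
    also have "\<dots> = (\<Sum>j<7. cc N j * (y$a) ^ (2 * j))" by (rule Pol_identity)
    finally show ?thesis by (simp add: y_def[symmetric] ya)
  qed
  have hi: "((\<lambda>x. \<Sum>j<7. cc N j * (qa a x) ^ (2 * j)) has_integral (\<Sum>j<7. cc N j * phim TYPE('n) j)) (ball 0 1)"
    by (intro has_integral_sum has_integral_mult_right moment_has_integral) auto
  have hi2: "((\<lambda>x. H (x /\<^sub>R norm x)) has_integral (\<Sum>j<7. cc N j * phim TYPE('n) j)) (ball 0 1)"
    by (rule has_integral_spike[OF negligible_sing[of 0] _ hi]) (use Hq in auto)
  have "(\<Sum>j<7. cc N j * phim TYPE('n) j) = phim TYPE('n) 0 * (\<Sum>j<7. cc N j * mm N j)"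
    unfolding sum_distrib_left
  proof (rule sum.cong)
    fix j assume "j \<in> {..<7::nat}"
    show "cc N j * phim TYPE('n) j = phim TYPE('n) 0 * (cc N j * mm N j)"
      by (subst phim_mm[where 'n='n]) (simp add: N_def)
  qed simp
  also have "\<dots> > 0" by (rule mult_pos_pos[OF phim_pos sum_pos[OF N3]])
  finally have pos: "(\<Sum>j<7. cc N j * phim TYPE('n) j) > 0" .
  have s3: "sphere_integral H > 0"
    unfolding sphere_integral_def using integral_unique[OF hi2] pos N3 by (simp add: N_def)
  show ?thesis
    using s1 s2 s3 unfolding H_def N_def by blast
qed

end
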